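(* For the branching-within-branching process described in the context and its associated branching process in random environment $(Z_n')_{n\ge0}$, for all $n,k,z\in\mathbb{N}_0$, $$\mathbb{P}_z(Z_n'=k)=\nu^{-n}\,\mathbb{E}_z\mathcal{T}_{n,k}\quad\text{and}\quad \mathbb{P}_z(Z_n'>0)=\nu^{-n}\,\mathbb{E}_z\mathcal{T}_n^*.$$
   Context: Branching-within-branching process (BwBP): Let $\mathbb{V}$ be the Ulam-Harris tree with root $\varnothing$. Let $(N_\mathsf{v})_{\mathsf{v}\in\mathbb{V}}$ be i.i.d. copies of an $\mathbb{N}_0$-valued random variable $N$ with law $(p_k)_{k\ge0}$ and finite mean $\nu=\mathbb{E}N$. The cell tree is the Galton-Watson tree $\mathbb{T}=\bigcup_n\mathbb{T}_n$, $\mathbb{T}_0=\{\varnothing\}$, $\mathbb{T}_n=\{\mathsf{v}_1\dots\mathsf{v}_n:\mathsf{v}_1\dots\mathsf{v}_{n-1}\in\mathbb{T}_{n-1},\ 1\le \mathsf{v}_n\le N_{\mathsf{v}_1\dots\mathsf{v}_{n-1}}\}$. For each $k\in\mathbb{N}$ let $X^{(\bullet,k)}=(X^{(1,k)},\dots,X^{(k,k)})$ be an $\mathbb{N}_0^k$-valued random vector and $X^{(\bullet,k)}_{i,\mathsf{v}}$, $i\in\mathbb{N},\mathsf{v}\in\mathbb{V}$, i.i.d. copies; these families for different $k$ are mutually independent and independent of $(N_\mathsf{v})$; $X^{(j,k)}_{i,\mathsf{v}}:=0$ for $j>k$. Parasite numbers: $Z_\varnothing$ given and $Z_{\mathsf{v}j}=\sum_{i=1}^{Z_\mathsf{v}}X^{(j,N_\mathsf{v})}_{i,\mathsf{v}}$.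 $\mathbb{P}_z$, $\mathbb{E}_z$ denote probability and expectation when the process starts with one cell containing $Z_\varnothing=z$ parasites. $\mathcal{T}_{n,k}$ is the number of cells $\mathsf{v}\in\mathbb{T}_n$ with $Z_\mathsf{v}=k$, and $\mathcal{T}_n^*=\#\{\mathsf{v}\in\mathbb{T}_n:Z_\mathsf{v}>0\}$ is the number of contaminated cells in generation $n$. Put $\mu_{j,k}=\mathbb{E}X^{(j,k)}$, $\gamma=\sum_{k\ge1}p_k\sum_{j=1}^k\mu_{j,k}$. Standing assumptions: $0<\gamma<\infty$; $p_1<1$ and the total number of parasites in generation 1 (starting from one cell with one parasite) is not a.s. equal to $1$; $p_k\,\mathbb{P}(X^{(j,k)}\ge2)>0$ for at least one pair $1\le j\le k$. Associated branching process in random environment (ABPRE): $(Z_n')_{n\ge0}$ is a Galton-Watson process in i.i.d. random environment $\Lambda=(\Lambda_n)_{n\ge0}$ with values in $\{\mathcal{L}(X^{(j,k)}):1\le j\le k<\infty\}$, $\mathbb{P}(\Lambda_0=\mathcal{L}(X^{(j,k)}))=p_k/\nu$, i.e. given $\Lambda$ all individuals of generation $n$ reproduce independently with law $\Lambda_n$; under $\mathbb{P}_z$ it starts with $Z_0'=z$. *)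

theory Defs
  imports "HOL-Probability.Probability"
begin

text \<open>Data: the cell offspring law p (law of N) and, for each k \<ge> 1, the joint law
  Xv k of the vector (X^(1,k),...,X^(k,k)), represented as a pmf on functions nat => nat
  of which only the components 1..k are used (X^(j,k) := 0 for j > k).\<close>

text \<open>Index set of the underlying independent random variables: N_v for each
  Ulam-Harris word v, and X^(.,k)_(i,v) for each word v, each k and each i.\<close>
datatype idx = NI "nat list" | XI "nat list" nat nat

definition coord_law :: "nat pmf \<Rightarrow> (nat \<Rightarrow> (nat \<Rightarrow> nat) pmf) \<Rightarrow> idx \<Rightarrow> (nat \<Rightarrow> nat) pmf" where
  "coord_law p Xv i = (case i of NI v \<Rightarrow> map_pmf (\<lambda>n _. n) p | XI v k j \<Rightarrow> Xv k)"

definition bwbp_space :: "nat pmf \<Rightarrow> (nat \<Rightarrow> (nat \<Rightarrow> nat) pmf) \<Rightarrow> (idx \<Rightarrow> nat \<Rightarrow> nat) measure" where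
  "bwbp_space p Xv = PiM UNIV (\<lambda>i. measure_pmf (coord_law p Xv i))"

definition Ncell :: "(idx \<Rightarrow> nat \<Rightarrow> nat) \<Rightarrow> nat list \<Rightarrow> nat" where
  "Ncell \<omega> v = \<omega> (NI v) 0"

definition Xcell :: "(idx \<Rightarrow> nat \<Rightarrow> nat) \<Rightarrow> nat list \<Rightarrow> nat \<Rightarrow> nat \<Rightarrow> nat \<Rightarrow> nat" where
  "Xcell \<omega> v k i j = \<omega> (XI v k i) j"

text \<open>Parasite numbers, computed on the reversed word (head = last letter):
  Z_root = z, Z_(vj) = sum_(i=1..Z_v) X^(j,N_v)_(i,v) (and 0 if j > N_v).\<close>
fun Zrev :: "(idx \<Rightarrow> nat \<Rightarrow> nat) \<Rightarrow> nat \<Rightarrow> nat list \<Rightarrow> nat" where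
  "Zrev \<omega> z [] = z"
| "Zrev \<omega> z (j # u) =
     (if j \<le> Ncell \<omega> (rev u)
      then (\<Sum>i\<in>{1..Zrev \<omega> z u}. Xcell \<omega> (rev u) (Ncell \<omega> (rev u)) i j)
      else 0)"

definition parasites :: "(idx \<Rightarrow> nat \<Rightarrow> nat) \<Rightarrow> nat \<Rightarrow> nat list \<Rightarrow> nat" where
  "parasites \<omega> z v = Zrev \<omega> z (rev v)"

definition cell_gen :: "(idx \<Rightarrow> nat \<Rightarrow> nat) \<Rightarrow> nat \<Rightarrow> nat list set" where
  "cell_gen \<omega> n = {v. length v = n \<and> (\<forall>m<n. 1 \<le> v ! m \<and> v ! m \<le> Ncell \<omega> (take m v))}"

definition Tnk :: "(idx \<Rightarrow> nat \<Rightarrow> nat) \<Rightarrow> nat \<Rightarrow> nat \<Rightarrow> nat \<Rightarrow> nat" where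
  "Tnk \<omega> z n k = card {v \<in> cell_gen \<omega> n. parasites \<omega> z v = k}"

definition Tstar :: "(idx \<Rightarrow> nat \<Rightarrow> nat) \<Rightarrow> nat \<Rightarrow> nat \<Rightarrow> nat" where
  "Tstar \<omega> z n = card {v \<in> cell_gen \<omega> n. parasites \<omega> z v > 0}"

definition nu :: "nat pmf \<Rightarrow> real" where
  "nu p = measure_pmf.expectation p real"

definition gamma_bwbp :: "nat pmf \<Rightarrow> (nat \<Rightarrow> (nat \<Rightarrow> nat) pmf) \<Rightarrow> ennreal" where
  "gamma_bwbp p Xv = (\<Sum>k. ennreal (pmf p k) * (\<Sum>j\<in>{1..k}. \<integral>\<^sup>+ x. of_nat (x j) \<partial>measure_pmf (Xv k)))"

definition gen1_total :: "nat pmf \<Rightarrow> (nat \<Rightarrow> (nat \<Rightarrow> nat) pmf) \<Rightarrow> nat pmf" where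
  "gen1_total p Xv = bind_pmf p (\<lambda>k. map_pmf (\<lambda>x. \<Sum>j\<in>{1..k}. x j) (Xv k))"

fun sum_iid :: "nat pmf \<Rightarrow> nat \<Rightarrow> nat pmf" where
  "sum_iid L 0 = return_pmf 0"
| "sum_iid L (Suc m) = bind_pmf L (\<lambda>a. map_pmf ((+) a) (sum_iid L m))"

fun gw_varenv :: "nat pmf list \<Rightarrow> nat \<Rightarrow> nat pmf" where
  "gw_varenv [] z = return_pmf z"
| "gw_varenv (L # Ls) z = bind_pmf (sum_iid L z) (gw_varenv Ls)"

fun env_seq :: "nat pmf pmf \<Rightarrow> nat \<Rightarrow> nat pmf list pmf" where
  "env_seq Env 0 = return_pmf []"
| "env_seq Env (Suc n) = bind_pmf Env (\<lambda>L. map_pmf (Cons L) (env_seq Env n))"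

definition env_law :: "(nat \<Rightarrow> (nat \<Rightarrow> nat) pmf) \<Rightarrow> (nat \<times> nat) pmf \<Rightarrow> nat pmf pmf" where
  "env_law Xv envp = map_pmf (\<lambda>(j,k). map_pmf (\<lambda>x. x j) (Xv k)) envp"

definition abpre :: "(nat \<Rightarrow> (nat \<Rightarrow> nat) pmf) \<Rightarrow> (nat \<times> nat) pmf \<Rightarrow> nat \<Rightarrow> nat \<Rightarrow> nat pmf" where
  "abpre Xv envp n z = bind_pmf (env_seq (env_law Xv envp) n) (\<lambda>Ls. gw_varenv Ls z)"

end

theory Submission
  imports Defs
begin



definition mrg :: "'i set \<Rightarrow> ('i \<Rightarrow> 'a) \<Rightarrow> ('i \<Rightarrow> 'a) \<Rightarrow> 'i \<Rightarrow> 'a" where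
  "mrg B w w' = (\<lambda>i. if i \<in> B then w' i else w i)"

lemma space_PiM_pmf[simp]: "space (PiM UNIV (\<lambda>i. measure_pmf (L i))) = UNIV"
  by (auto simp: space_PiM PiE_def extensional_def)

lemma prob_space_PiM_pmf: "prob_space (PiM UNIV (\<lambda>i. measure_pmf (L i)))"
  by (rule prob_space_PiM) (simp add: prob_space_measure_pmf)

lemma emb_eq: "prod_emb UNIV (\<lambda>i. measure_pmf (L i)) J (PiE J A) = {w. \<forall>j\<in>J. w j \<in> A j}"
  by (auto simp: prod_emb_def PiE_iff)

lemma meas_mrg: "(\<lambda>(w, w'). mrg B w w') \<in> measurable (PiM UNIV (\<lambda>i. measure_pmf (L i)) \<Otimes>\<^sub>M PiM UNIV (\<lambda>i. measure_pmf (L i))) (PiM UNIV (\<lambda>i. measure_pmf (L i)))"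
  unfolding mrg_def split_beta'
  apply (rule measurable_PiM_single')
  subgoal for i by (cases "i \<in> B") simp_all
  by simp

lemma distr_mrg:
  fixes L :: "'a \<Rightarrow> 'b pmf"
  defines "P \<equiv> PiM UNIV (\<lambda>i. measure_pmf (L i))"
  shows "distr (P \<Otimes>\<^sub>M P) P (\<lambda>(w, w'). mrg B w w') = P"
proof (rule measure_eqI_PiM_infinite[where I=UNIV and M="\<lambda>i. measure_pmf (L i)"])
  interpret prob_space P unfolding P_def by (rule prob_space_PiM_pmf)
  interpret pp: pair_prob_space P P ..
  show "sets (distr (P \<Otimes>\<^sub>M P) P (\<lambda>(w, w'). mrg B w w')) = sets (PiM UNIV (\<lambda>i. measure_pmf (L i)))"
    by (simp add: P_def)
  show "sets P = sets (PiM UNIV (\<lambda>i. measure_pmf (L i)))" by (simp add: P_def)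
  show "finite_measure (distr (P \<Otimes>\<^sub>M P) P (\<lambda>(w, w'). mrg B w w'))"
  proof -
    have "prob_space (P \<Otimes>\<^sub>M P)" by (rule prob_space_pair) unfold_locales
    from prob_space.prob_space_distr[OF this, of "\<lambda>(w, w'). mrg B w w'" P]
    show ?thesis by (simp add: P_def meas_mrg prob_space.axioms(1))
  qed
  fix A J assume J: "finite J" "J \<subseteq> (UNIV::'a set)"
  have e: "\<And>J. finite J \<Longrightarrow> emeasure P {w. \<forall>j\<in>J. w j \<in> A j} = (\<Prod>j\<in>J. emeasure (measure_pmf (L j)) (A j))"
    unfolding P_def emb_eq[of L, symmetric]
    by (rule emeasure_PiM_emb) (auto simp: prob_space_measure_pmf)
  have s: "\<And>J. finite J \<Longrightarrow> {w. \<forall>j\<in>J. w j \<in> A j} \<in> sets P"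
    unfolding P_def emb_eq[of L, symmetric] by (rule sets_PiM_I) auto
  have pre: "(\<lambda>(w, w'). mrg B w w') -` {w. \<forall>j\<in>J. w j \<in> A j} \<inter> space (P \<Otimes>\<^sub>M P)
      = {w. \<forall>j\<in>J-B. w j \<in> A j} \<times> {w. \<forall>j\<in>J \<inter> B. w j \<in> A j}"
    by (auto simp: space_pair_measure P_def mrg_def)
  have "emeasure (distr (P \<Otimes>\<^sub>M P) P (\<lambda>(w, w'). mrg B w w')) {w. \<forall>j\<in>J. w j \<in> A j}
      = emeasure (P \<Otimes>\<^sub>M P) ((\<lambda>(w, w'). mrg B w w') -` {w. \<forall>j\<in>J. w j \<in> A j} \<inter> space (P \<Otimes>\<^sub>M P))"
    by (rule emeasure_distr) (auto simp: P_def meas_mrg s[unfolded P_def] J)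
  also have "\<dots> = emeasure (P \<Otimes>\<^sub>M P) ({w. \<forall>j\<in>J-B. w j \<in> A j} \<times> {w. \<forall>j\<in>J \<inter> B. w j \<in> A j})"
    by (simp only: pre)
  also have "\<dots> = (\<Prod>j\<in>J-B. emeasure (measure_pmf (L j)) (A j)) * (\<Prod>j\<in>J\<inter>B. emeasure (measure_pmf (L j)) (A j))"
    using J by (subst emeasure_pair_measure_Times[OF s s]) (simp_all add: e)
  also have "\<dots> = (\<Prod>j\<in>J. emeasure (measure_pmf (L j)) (A j))"
    using J by (subst prod.union_disjoint[symmetric]) (auto intro!: prod.cong)
  finally show "emeasure (distr (P \<Otimes>\<^sub>M P) P (\<lambda>(w, w'). mrg B w w')) (prod_emb UNIV (\<lambda>i. measure_pmf (L i)) J (Pi\<^sub>E J A)) =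
       emeasure P (prod_emb UNIV (\<lambda>i. measure_pmf (L i)) J (Pi\<^sub>E J A))"
    by (simp add: emb_eq e J)
qed


lemma nn_mrg:
  fixes L :: "'a \<Rightarrow> 'b pmf"
  assumes G: "G \<in> borel_measurable (PiM UNIV (\<lambda>i. measure_pmf (L i)))"
  shows "(\<integral>\<^sup>+w. G w \<partial>PiM UNIV (\<lambda>i. measure_pmf (L i)))
       = (\<integral>\<^sup>+w'. \<integral>\<^sup>+w. G (mrg B w w') \<partial>PiM UNIV (\<lambda>i. measure_pmf (L i)) \<partial>PiM UNIV (\<lambda>i. measure_pmf (L i)))"
proof -
  let ?P = "PiM UNIV (\<lambda>i. measure_pmf (L i))"
  interpret prob_space ?P by (rule prob_space_PiM_pmf)
  interpret pp: pair_prob_space ?P ?P ..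
  have "(\<integral>\<^sup>+w. G w \<partial>?P) = (\<integral>\<^sup>+w. G w \<partial>distr (?P \<Otimes>\<^sub>M ?P) ?P (\<lambda>(w, w'). mrg B w w'))"
    by (simp add: distr_mrg)
  also have "\<dots> = (\<integral>\<^sup>+x. G (case x of (w, w') \<Rightarrow> mrg B w w') \<partial>(?P \<Otimes>\<^sub>M ?P))"
    by (rule nn_integral_distr) (simp_all add: meas_mrg G)
  also have "\<dots> = (\<integral>\<^sup>+w'. \<integral>\<^sup>+w. G (mrg B w w') \<partial>?P \<partial>?P)"
  proof -
    have m: "(\<lambda>x. G (mrg B (fst x) (snd x))) \<in> borel_measurable (?P \<Otimes>\<^sub>M ?P)"
      using measurable_compose[OF meas_mrg G, of B] by (simp add: split_beta')
    show ?thesis by (subst pp.nn_integral_snd[symmetric]) (auto simp: m split_beta')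
  qed
  finally show ?thesis .
qed

lemma nn_comp:
  fixes L :: "'a \<Rightarrow> 'b pmf"
  shows "(\<integral>\<^sup>+w. f (w i) \<partial>PiM UNIV (\<lambda>i. measure_pmf (L i))) = (\<integral>\<^sup>+x. f x \<partial>measure_pmf (L i))"
proof -
  have "(\<integral>\<^sup>+x. f x \<partial>measure_pmf (L i)) = (\<integral>\<^sup>+x. f x \<partial>distr (PiM UNIV (\<lambda>i. measure_pmf (L i))) (measure_pmf (L i)) (\<lambda>w. w i))"
    by (subst distr_PiM_component) (auto simp: prob_space_measure_pmf)
  also have "\<dots> = (\<integral>\<^sup>+w. f (w i) \<partial>PiM UNIV (\<lambda>i. measure_pmf (L i)))"
    by (rule nn_integral_distr) auto
  finally show ?thesis ..
qed

lemma meas_coord[measurable]: "(\<lambda>w. w i j) \<in> PiM UNIV (\<lambda>i. measure_pmf (L i)) \<rightarrow>\<^sub>M count_space UNIV"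
proof -
  have "(\<lambda>w. w i) \<in> PiM UNIV (\<lambda>i. measure_pmf (L i)) \<rightarrow>\<^sub>M count_space UNIV"
    using measurable_component_singleton[of i UNIV "\<lambda>i. measure_pmf (L i)"] by simp
  then show ?thesis by (rule measurable_compose) simp
qed




fun iword :: "idx \<Rightarrow> nat list" where
  "iword (NI v) = v" | "iword (XI v k i) = v"

definition Cc :: "(idx \<Rightarrow> nat \<Rightarrow> nat) \<Rightarrow> nat list \<Rightarrow> bool" where
  "Cc w v = (\<forall>m<length v. 1 \<le> v!m \<and> v!m \<le> Ncell w (take m v))"

lemma cell_gen_iff: "v \<in> cell_gen w n \<longleftrightarrow> length v = n \<and> Cc w v"
  by (auto simp: cell_gen_def Cc_def)

lemma Cc_Nil[simp]: "Cc w []" by (simp add: Cc_def)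

lemma Cc_snoc: "Cc w (v@[j]) \<longleftrightarrow> Cc w v \<and> 1 \<le> j \<and> j \<le> Ncell w v"
  unfolding Cc_def
  by (auto simp: nth_append less_Suc_eq)

lemma par_Nil[simp]: "parasites w z [] = z" by (simp add: parasites_def)

lemma par_snoc: "parasites w z (v@[j]) = (if j \<le> Ncell w v then (\<Sum>i\<in>{1..parasites w z v}. Xcell w v (Ncell w v) i j) else 0)"
  by (simp add: parasites_def)

lemma par_cong:
  assumes "\<And>m i. m < length v \<Longrightarrow> iword i = take m v \<Longrightarrow> w i = w' i"
  shows "parasites w z v = parasites w' z v \<and> Cc w v = Cc w' v"
  using assms
proof (induction v rule: rev_induct)
  case Nil then show ?case by simp
next
  case (snoc j u)
  have h: "\<And>m i. m < length u \<Longrightarrow> iword i = take m u \<Longrightarrow> w i = w' i"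
  proof -
    fix m i assume "m < length u" "iword i = take m u"
    then show "w i = w' i" using snoc.prems[of m i] by simp
  qed
  have hu: "\<And>i. iword i = u \<Longrightarrow> w i = w' i"
    using snoc.prems[of "length u"] by simp
  have N: "Ncell w u = Ncell w' u" using hu[of "NI u"] by (simp add: Ncell_def)
  have X: "\<And>K i. Xcell w u K i = Xcell w' u K i" using hu by (simp add: Xcell_def fun_eq_iff)
  show ?case using snoc.IH[OF h] N X by (simp add: par_snoc Cc_snoc)
qed

lemma meas_cnt_sum:
  fixes f :: "'i \<Rightarrow> 'a \<Rightarrow> nat"
  assumes "\<And>i. i \<in> S \<Longrightarrow> f i \<in> M \<rightarrow>\<^sub>M count_space UNIV"
  shows "(\<lambda>w. \<Sum>i\<in>S. f i w) \<in> M \<rightarrow>\<^sub>M count_space UNIV"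
proof -
  have e: "measurable M (borel :: nat measure) = measurable M (count_space UNIV)"
    by (rule measurable_cong_sets[OF refl sets_borel_eq_count_space])
  show ?thesis using assms unfolding e[symmetric] by (intro borel_measurable_sum) auto
qed

abbreviation PP :: "nat pmf \<Rightarrow> (nat \<Rightarrow> (nat \<Rightarrow> nat) pmf) \<Rightarrow> (idx \<Rightarrow> nat \<Rightarrow> nat) measure" where
  "PP p Xv \<equiv> PiM UNIV (\<lambda>i. measure_pmf (coord_law p Xv i))"

lemma bw_eq: "bwbp_space p Xv = PP p Xv" by (simp add: bwbp_space_def)

lemma meas_Ncell[measurable]: "(\<lambda>w. Ncell w v) \<in> PP p Xv \<rightarrow>\<^sub>M count_space UNIV"
  unfolding Ncell_def by (rule meas_coord)

lemma meas_Xcell[measurable]: "(\<lambda>w. Xcell w v K i j) \<in> PP p Xv \<rightarrow>\<^sub>M count_space UNIV"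
  unfolding Xcell_def by (rule meas_coord)

lemma meas_par[measurable]: "(\<lambda>w. parasites w z v) \<in> PP p Xv \<rightarrow>\<^sub>M count_space UNIV"
proof (induction v rule: rev_induct)
  case Nil then show ?case by simp
next
  case (snoc j u)
  have "(\<lambda>w. (\<lambda>m K w. if j \<le> K then (\<Sum>i\<in>{1..m}. Xcell w u K i j) else 0) (parasites w z u) (Ncell w u) w)
        \<in> PP p Xv \<rightarrow>\<^sub>M count_space UNIV"
  proof (rule measurable_compose_countable[OF _ snoc.IH])
    fix m :: nat
    show "(\<lambda>w. (\<lambda>m K w. if j \<le> K then (\<Sum>i\<in>{1..m}. Xcell w u K i j) else 0) m (Ncell w u) w)
        \<in> PP p Xv \<rightarrow>\<^sub>M count_space UNIV"
    proof (rule measurable_compose_countable[OF _ meas_Ncell])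
      fix K :: nat
      show "(\<lambda>w. (\<lambda>m K w. if j \<le> K then (\<Sum>i\<in>{1..m}. Xcell w u K i j) else 0) m K w)
        \<in> PP p Xv \<rightarrow>\<^sub>M count_space UNIV"
      proof (cases "j \<le> K")
        case True
        then show ?thesis by (simp only: if_True) (rule meas_cnt_sum, rule meas_Xcell)
      qed (simp only: if_False measurable_count_space_const)
    qed
  qed
  then show ?case by (simp only: par_snoc)
qed

lemma meas_Cc[measurable]: "Measurable.pred (PP p Xv) (\<lambda>w. Cc w v)"
  unfolding Cc_def by measurable




lemma suminf_single: "(\<Sum>m. of_bool (x = m) * (f m :: ennreal)) = f x"
proof -
  have "(\<lambda>m. of_bool (x = m) * f m) = (\<lambda>m. if m = x then f x else 0)" by auto
  moreover have "(\<lambda>m. if m = x then f x else 0) sums f x" by (rule sums_single)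
  ultimately show ?thesis by (simp add: sums_iff)
qed

lemma nn_pmf_single: "(\<integral>\<^sup>+s. of_bool (s = k) \<partial>measure_pmf M) = ennreal (pmf M k)"
proof -
  have "(\<integral>\<^sup>+s. of_bool (s = k) \<partial>measure_pmf M) = (\<integral>\<^sup>+s. indicator {k} s \<partial>measure_pmf M)"
    by (intro nn_integral_cong) (auto simp: indicator_def)
  also have "\<dots> = ennreal (pmf M k)" by (simp add: emeasure_pmf_single)
  finally show ?thesis .
qed

lemma meas_ennreal_nat[measurable]:
  fixes f :: "nat \<Rightarrow> ennreal"
  assumes "g \<in> M \<rightarrow>\<^sub>M count_space UNIV"
  shows "(\<lambda>w. f (g w)) \<in> borel_measurable M"
  by (rule measurable_compose[OF assms]) simp

lemma iid:
  fixes f :: "nat \<Rightarrow> ennreal"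
  shows "(\<integral>\<^sup>+w. f (\<Sum>i\<in>{1..m}. Xcell w v K i j) \<partial>PP p Xv)
       = (\<integral>\<^sup>+s. f s \<partial>measure_pmf (sum_iid (map_pmf (\<lambda>x. x j) (Xv K)) m))"
proof (induction m arbitrary: f)
  case 0
  interpret prob_space "PP p Xv" by (rule prob_space_PiM_pmf)
  show ?case using emeasure_space_1 by simp
next
  case (Suc m)
  let ?c = "XI v K (Suc m)"
  have sS: "\<And>w. (\<Sum>i\<in>{1..Suc m}. Xcell w v K i j) = w ?c j + (\<Sum>i\<in>{1..m}. Xcell w v K i j)"
    by (simp add: Xcell_def)
  have mrgS: "\<And>w w'. (\<Sum>i\<in>{1..m}. Xcell (mrg {?c} w w') v K i j) = (\<Sum>i\<in>{1..m}. Xcell w v K i j)"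
    by (intro sum.cong) (auto simp: Xcell_def mrg_def)
  have mrgc: "\<And>w w'. mrg {?c} w w' ?c = w' ?c" by (simp add: mrg_def)
  have meas: "(\<lambda>w. f (w ?c j + (\<Sum>i\<in>{1..m}. Xcell w v K i j))) \<in> borel_measurable (PP p Xv)"
  proof (rule meas_ennreal_nat)
    have e: "measurable (PP p Xv) (borel :: nat measure) = measurable (PP p Xv) (count_space UNIV)"
      by (rule measurable_cong_sets[OF refl sets_borel_eq_count_space])
    show "(\<lambda>w. w ?c j + (\<Sum>i\<in>{1..m}. Xcell w v K i j)) \<in> PP p Xv \<rightarrow>\<^sub>M count_space UNIV"
      unfolding e[symmetric]
      apply (rule borel_measurable_add)
      using meas_coord[of ?c j "coord_law p Xv"]
        meas_cnt_sum[of "{1..m}" "\<lambda>i w. Xcell w v K i j" "PP p Xv", OF meas_Xcell]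
      unfolding e by auto
  qed
  have "(\<integral>\<^sup>+w. f (\<Sum>i\<in>{1..Suc m}. Xcell w v K i j) \<partial>PP p Xv)
      = (\<integral>\<^sup>+w. f (w ?c j + (\<Sum>i\<in>{1..m}. Xcell w v K i j)) \<partial>PP p Xv)"
    by (simp only: sS)
  also have "\<dots> = (\<integral>\<^sup>+w'. \<integral>\<^sup>+w. f (w' ?c j + (\<Sum>i\<in>{1..m}. Xcell w v K i j)) \<partial>PP p Xv \<partial>PP p Xv)"
    by (subst nn_mrg[OF meas, of "{?c}"]) (simp only: mrgS mrgc)
  also have "\<dots> = (\<integral>\<^sup>+w'. \<integral>\<^sup>+s. f (w' ?c j + s) \<partial>measure_pmf (sum_iid (map_pmf (\<lambda>x. x j) (Xv K)) m) \<partial>PP p Xv)"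
  proof (rule nn_integral_cong)
    fix w' show "(\<integral>\<^sup>+w. f (w' ?c j + (\<Sum>i\<in>{1..m}. Xcell w v K i j)) \<partial>PP p Xv) = (\<integral>\<^sup>+s. f (w' ?c j + s) \<partial>measure_pmf (sum_iid (map_pmf (\<lambda>x. x j) (Xv K)) m))"
      by (rule Suc.IH[of "\<lambda>s. f (w' ?c j + s)"])
  qed
  also have "\<dots> = (\<integral>\<^sup>+x. \<integral>\<^sup>+s. f (x j + s) \<partial>measure_pmf (sum_iid (map_pmf (\<lambda>x. x j) (Xv K)) m) \<partial>measure_pmf (coord_law p Xv ?c))"
    by (rule nn_comp[where f="\<lambda>x. \<integral>\<^sup>+s. f (x j + s) \<partial>measure_pmf (sum_iid (map_pmf (\<lambda>x. x j) (Xv K)) m)"])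
  also have "\<dots> = (\<integral>\<^sup>+s. f s \<partial>measure_pmf (sum_iid (map_pmf (\<lambda>x. x j) (Xv K)) (Suc m)))"
    by (simp add: coord_law_def)
  finally show ?case .
qed




lemma meas_S[measurable]: "(\<lambda>w. \<Sum>i\<in>{1..m}. Xcell w v (Ncell w v) i j) \<in> PP p Xv \<rightarrow>\<^sub>M count_space UNIV"
  by (rule measurable_compose_countable[where f="\<lambda>K w. \<Sum>i\<in>{1..m}. Xcell w v K i j", OF _ meas_Ncell])
     (rule meas_cnt_sum, rule meas_Xcell)

definition RR :: "nat pmf \<Rightarrow> (nat \<Rightarrow> (nat \<Rightarrow> nat) pmf) \<Rightarrow> nat \<Rightarrow> nat \<Rightarrow> nat \<Rightarrow> ennreal" where
  "RR p Xv m j k = (\<integral>\<^sup>+K. of_bool (1 \<le> j \<and> j \<le> K) * ennreal (pmf (sum_iid (map_pmf (\<lambda>x. x j) (Xv K)) m) k) \<partial>measure_pmf p)"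

lemma meas_HH: "(\<lambda>w. of_bool (1 \<le> j \<and> j \<le> Ncell w v \<and> (\<Sum>i\<in>{1..m}. Xcell w v (Ncell w v) i j) = k) :: ennreal) \<in> borel_measurable (PP p Xv)"
  by measurable

lemma Hint: "(\<integral>\<^sup>+w. of_bool (1 \<le> j \<and> j \<le> Ncell w v \<and> (\<Sum>i\<in>{1..m}. Xcell w v (Ncell w v) i j) = k) \<partial>PP p Xv) = RR p Xv m j k"
proof -
  let ?c = "NI v"
  have e1: "\<And>w w'. Ncell (mrg {?c} w w') v = Ncell w' v" by (simp add: Ncell_def mrg_def)
  have e2: "\<And>w w' K i. Xcell (mrg {?c} w w') v K i j = Xcell w v K i j" by (simp add: Xcell_def mrg_def)
  have "(\<integral>\<^sup>+w. of_bool (1 \<le> j \<and> j \<le> Ncell w v \<and> (\<Sum>i\<in>{1..m}. Xcell w v (Ncell w v) i j) = k) \<partial>PP p Xv)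
    = (\<integral>\<^sup>+w'. \<integral>\<^sup>+w. of_bool (1 \<le> j \<and> j \<le> Ncell w' v \<and> (\<Sum>i\<in>{1..m}. Xcell w v (Ncell w' v) i j) = k) \<partial>PP p Xv \<partial>PP p Xv)"
    by (subst nn_mrg[OF meas_HH, where B="{?c}"]) (simp only: e1 e2)
  also have "\<dots> = (\<integral>\<^sup>+w'. (\<lambda>K. of_bool (1 \<le> j \<and> j \<le> K) * ennreal (pmf (sum_iid (map_pmf (\<lambda>x. x j) (Xv K)) m) k)) (Ncell w' v) \<partial>PP p Xv)"
  proof (rule nn_integral_cong)
    fix w'
    let ?K = "Ncell w' v"
    have "(\<integral>\<^sup>+w. of_bool (1 \<le> j \<and> j \<le> ?K \<and> (\<Sum>i\<in>{1..m}. Xcell w v ?K i j) = k) \<partial>PP p Xv)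
       = (\<integral>\<^sup>+s. of_bool (1 \<le> j \<and> j \<le> ?K \<and> s = k) \<partial>measure_pmf (sum_iid (map_pmf (\<lambda>x. x j) (Xv ?K)) m))"
      by (rule iid[where f="\<lambda>s. of_bool (1 \<le> j \<and> j \<le> ?K \<and> s = k)"])
    also have "\<dots> = (\<integral>\<^sup>+s. of_bool (1 \<le> j \<and> j \<le> ?K) * of_bool (s = k) \<partial>measure_pmf (sum_iid (map_pmf (\<lambda>x. x j) (Xv ?K)) m))"
      by (intro nn_integral_cong) auto
    also have "\<dots> = of_bool (1 \<le> j \<and> j \<le> ?K) * ennreal (pmf (sum_iid (map_pmf (\<lambda>x. x j) (Xv ?K)) m) k)"
      by (simp add: nn_integral_cmult nn_pmf_single)
    finally show "(\<integral>\<^sup>+w. of_bool (1 \<le> j \<and> j \<le> ?K \<and> (\<Sum>i\<in>{1..m}. Xcell w v ?K i j) = k) \<partial>PP p Xv)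
      = (\<lambda>K. of_bool (1 \<le> j \<and> j \<le> K) * ennreal (pmf (sum_iid (map_pmf (\<lambda>x. x j) (Xv K)) m) k)) ?K" by simp
  qed
  also have "\<dots> = (\<integral>\<^sup>+x. (\<lambda>K. of_bool (1 \<le> j \<and> j \<le> K) * ennreal (pmf (sum_iid (map_pmf (\<lambda>x. x j) (Xv K)) m) k)) (x 0) \<partial>measure_pmf (coord_law p Xv ?c))"
    unfolding Ncell_def by (rule nn_comp)
  also have "\<dots> = RR p Xv m j k"
    by (simp add: coord_law_def RR_def)
  finally show ?thesis .
qed




definition bb :: "nat pmf \<Rightarrow> (nat \<Rightarrow> (nat \<Rightarrow> nat) pmf) \<Rightarrow> nat \<Rightarrow> nat list \<Rightarrow> nat \<Rightarrow> ennreal" where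
  "bb p Xv z v k = (\<integral>\<^sup>+w. of_bool (Cc w v \<and> parasites w z v = k) \<partial>PP p Xv)"

lemma meas_ind[measurable]: "(\<lambda>w. of_bool (Cc w v \<and> parasites w z v = k) :: ennreal) \<in> borel_measurable (PP p Xv)"
  by measurable

lemma mult_ind: "(of_bool (Cc w v \<and> parasites w z v = m) * (x::ennreal)) = of_bool (parasites w z v = m) * (of_bool (Cc w v) * x)"
  by auto

lemma bb_Nil: "bb p Xv z [] k = of_bool (z = k)"
proof -
  interpret prob_space "PP p Xv" by (rule prob_space_PiM_pmf)
  show ?thesis using emeasure_space_1 by (simp add: bb_def)
qed

lemma bb_snoc: "bb p Xv z (v@[j]) k = (\<Sum>m. bb p Xv z v m * RR p Xv m j k)"
proof -
  define HH where "HH m w = (of_bool (1 \<le> j \<and> j \<le> Ncell w v \<and> (\<Sum>i\<in>{1..m}. Xcell w v (Ncell w v) i j) = k) :: ennreal)" for m w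
  define B where "B = {i. iword i = v}"
  have pt: "\<And>w. (of_bool (Cc w (v@[j]) \<and> parasites w z (v@[j]) = k) :: ennreal) = of_bool (Cc w v) * HH (parasites w z v) w"
  proof -
    fix w
    have "(Cc w (v@[j]) \<and> parasites w z (v@[j]) = k) \<longleftrightarrow> Cc w v \<and> (1 \<le> j \<and> j \<le> Ncell w v \<and> (\<Sum>i\<in>{1..parasites w z v}. Xcell w v (Ncell w v) i j) = k)"
      unfolding Cc_snoc par_snoc by auto
    then show "(of_bool (Cc w (v@[j]) \<and> parasites w z (v@[j]) = k) :: ennreal) = of_bool (Cc w v) * HH (parasites w z v) w"
      unfolding HH_def by (simp only: of_bool_conj)
  qed
  have inv1: "\<And>w w'. Cc (mrg B w w') v = Cc w v \<and> parasites (mrg B w w') z v = parasites w z v"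
  proof -
    fix w w'
    have "parasites (mrg B w w') z v = parasites w z v \<and> Cc (mrg B w w') v = Cc w v"
    proof (rule par_cong)
      fix m i assume "m < length v" "iword i = take m v"
      then have "i \<notin> B"
      proof -
        assume a: "m < length v" "iword i = take m v"
        show "i \<notin> B"
        proof
          assume "i \<in> B"
          then have "take m v = v" using a by (simp add: B_def)
          then have "length (take m v) = length v" by simp
          with a show False by simp
        qed
      qed
      then show "mrg B w w' i = w i" by (simp add: mrg_def)
    qed
    then show "Cc (mrg B w w') v = Cc w v \<and> parasites (mrg B w w') z v = parasites w z v" by simp
  qed
  have inv2: "\<And>m w w'. HH m (mrg B w w') = HH m w'"
    by (simp add: HH_def mrg_def B_def Ncell_def Xcell_def)
  have mHH: "\<And>m. HH m \<in> borel_measurable (PP p Xv)"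
    unfolding HH_def by (rule meas_HH)
  have "bb p Xv z (v@[j]) k = (\<integral>\<^sup>+w'. \<integral>\<^sup>+w. of_bool (Cc w v) * HH (parasites w z v) w' \<partial>PP p Xv \<partial>PP p Xv)"
    unfolding bb_def by (subst nn_mrg[OF meas_ind, where B=B]) (simp only: pt inv1 inv2)
  also have "\<dots> = (\<integral>\<^sup>+w'. (\<Sum>m. bb p Xv z v m * HH m w') \<partial>PP p Xv)"
  proof (rule nn_integral_cong)
    fix w'
    have "(\<integral>\<^sup>+w. of_bool (Cc w v) * HH (parasites w z v) w' \<partial>PP p Xv)
        = (\<integral>\<^sup>+w. (\<Sum>m. of_bool (Cc w v \<and> parasites w z v = m) * HH m w') \<partial>PP p Xv)"
    proof (rule nn_integral_cong)
      fix w
      have "(\<Sum>m. of_bool (Cc w v \<and> parasites w z v = m) * HH m w')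
          = (\<Sum>m. of_bool (parasites w z v = m) * (of_bool (Cc w v) * HH m w'))"
        by (simp only: mult_ind)
      also have "\<dots> = of_bool (Cc w v) * HH (parasites w z v) w'"
        by (rule suminf_single)
      finally show "of_bool (Cc w v) * HH (parasites w z v) w' = (\<Sum>m. of_bool (Cc w v \<and> parasites w z v = m) * HH m w')" ..
    qed
    also have "\<dots> = (\<Sum>m. \<integral>\<^sup>+w. of_bool (Cc w v \<and> parasites w z v = m) * HH m w' \<partial>PP p Xv)"
      by (rule nn_integral_suminf) (rule borel_measurable_times_ennreal[OF meas_ind measurable_const], simp)
    also have "\<dots> = (\<Sum>m. bb p Xv z v m * HH m w')"
      by (simp only: nn_integral_multc[OF meas_ind] bb_def)
    finally show "(\<integral>\<^sup>+w. of_bool (Cc w v) * HH (parasites w z v) w' \<partial>PP p Xv) = (\<Sum>m. bb p Xv z v m * HH m w')" .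
  qed
  also have "\<dots> = (\<Sum>m. \<integral>\<^sup>+w'. bb p Xv z v m * HH m w' \<partial>PP p Xv)"
    by (rule nn_integral_suminf) (rule borel_measurable_times_ennreal[OF measurable_const mHH], simp)
  also have "\<dots> = (\<Sum>m. bb p Xv z v m * RR p Xv m j k)"
  proof -
    have Hm: "\<And>m. integral\<^sup>N (PP p Xv) (HH m) = RR p Xv m j k"
      unfolding HH_def by (rule Hint)
    show ?thesis by (simp only: nn_integral_cmult[OF mHH] Hm)
  qed
  finally show ?thesis .
qed




lemma env_seq_snoc: "env_seq E (Suc n) = bind_pmf (env_seq E n) (\<lambda>Ls. map_pmf (\<lambda>L. Ls @ [L]) E)"
proof (induction n)
  case 0 then show ?case by (simp add: map_pmf_def bind_return_pmf bind_assoc_pmf bind_return_pmf')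
next
  case (Suc n)
  show ?case
    apply (subst env_seq.simps(2))
    apply (subst Suc)
    apply (simp add: map_pmf_def bind_assoc_pmf bind_return_pmf)
    done
qed

lemma gw_snoc: "gw_varenv (Ls @ [L]) z = bind_pmf (gw_varenv Ls z) (sum_iid L)"
proof (induction Ls arbitrary: z)
  case Nil
  have "gw_varenv [] = return_pmf" by (rule ext) simp
  then show ?case by (simp add: bind_return_pmf bind_return_pmf')
next
  case (Cons a Ls)
  have "gw_varenv (Ls@[L]) = (\<lambda>x. gw_varenv Ls x \<bind> sum_iid L)" using Cons by auto
  then show ?case by (simp add: bind_assoc_pmf)
qed

lemma abpre_Suc_pmf: "abpre Xv envp (Suc n) z = bind_pmf (abpre Xv envp n z) (\<lambda>m. bind_pmf (env_law Xv envp) (\<lambda>L. sum_iid L m))"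
  unfolding abpre_def env_seq_snoc
  by (simp add: bind_assoc_pmf bind_map_pmf gw_snoc bind_commute_pmf[of "env_law Xv envp"])

definition SS :: "(nat \<Rightarrow> (nat \<Rightarrow> nat) pmf) \<Rightarrow> (nat \<times> nat) pmf \<Rightarrow> nat \<Rightarrow> nat \<Rightarrow> ennreal" where
  "SS Xv envp m k = (\<integral>\<^sup>+L. ennreal (pmf (sum_iid L m) k) \<partial>measure_pmf (env_law Xv envp))"

lemma abpre_Suc: "ennreal (pmf (abpre Xv envp (Suc n) z) k) = (\<Sum>m. ennreal (pmf (abpre Xv envp n z) m) * SS Xv envp m k)"
  unfolding abpre_Suc_pmf ennreal_pmf_bind SS_def
  by (simp add: nn_integral_measure_pmf nn_integral_count_space_nat)

lemma abpre_0: "abpre Xv envp 0 z = return_pmf z"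
  by (simp add: abpre_def bind_return_pmf)

lemma nu_pos:
  assumes envp: "\<And>j k. pmf envp (j, k) = (if 1 \<le> j \<and> j \<le> k then pmf p k / nu p else 0)"
  shows "nu p > 0"
proof -
  obtain x where "x \<in> set_pmf envp" using set_pmf_not_empty by fastforce
  then have "pmf envp x > 0" by (simp add: pmf_positive)
  then obtain j K where "pmf p K / nu p > 0" using envp by (cases x) (auto split: if_splits)
  moreover have "nu p \<ge> 0" unfolding nu_def by (rule integral_nonneg_AE) auto
  ultimately show ?thesis by (simp add: zero_less_divide_iff)
qed

definition QQ :: "nat pmf \<Rightarrow> (nat \<Rightarrow> (nat \<Rightarrow> nat) pmf) \<Rightarrow> nat \<Rightarrow> nat \<Rightarrow> ennreal" where
  "QQ p Xv m k = (\<integral>\<^sup>+j. RR p Xv m j k \<partial>count_space UNIV)"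

lemma QQ_eq:
  assumes envp: "\<And>j k. pmf envp (j, k) = (if 1 \<le> j \<and> j \<le> k then pmf p k / nu p else 0)"
  shows "QQ p Xv m k = ennreal (nu p) * SS Xv envp m k"
proof -
  have nu: "nu p > 0" by (rule nu_pos[OF envp])
  let ?f = "\<lambda>j K. ennreal (pmf (sum_iid (map_pmf (\<lambda>x. x j) (Xv K)) m) k)"
  have "SS Xv envp m k = (\<integral>\<^sup>+x. ennreal (pmf envp x) * ?f (fst x) (snd x) \<partial>count_space UNIV)"
    unfolding SS_def env_law_def nn_integral_map_pmf by (simp add: nn_integral_measure_pmf split_beta')
  also have "\<dots> = (\<integral>\<^sup>+j. \<integral>\<^sup>+K. ennreal (pmf envp (j, K)) * ?f j K \<partial>count_space UNIV \<partial>count_space UNIV)"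
    by (subst nn_integral_fst_count_space[symmetric]) simp
  finally have S: "ennreal (nu p) * SS Xv envp m k = (\<integral>\<^sup>+j. \<integral>\<^sup>+K. ennreal (nu p) * (ennreal (pmf envp (j, K)) * ?f j K) \<partial>count_space UNIV \<partial>count_space UNIV)"
    by (simp add: nn_integral_cmult)
  have pt: "\<And>j K. ennreal (nu p) * (ennreal (pmf envp (j, K)) * ?f j K) = ennreal (pmf p K) * (of_bool (1 \<le> j \<and> j \<le> K) * ?f j K)"
  proof -
    fix j K
    show "ennreal (nu p) * (ennreal (pmf envp (j, K)) * ?f j K) = ennreal (pmf p K) * (of_bool (1 \<le> j \<and> j \<le> K) * ?f j K)"
    proof (cases "1 \<le> j \<and> j \<le> K")
      case True
      have "ennreal (nu p) * ennreal (pmf p K / nu p) = ennreal (nu p * (pmf p K / nu p))"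
        using nu by (subst ennreal_mult[symmetric]) auto
      also have "\<dots> = ennreal (pmf p K)" using nu by simp
      finally show ?thesis using True envp[of j K] by (simp add: mult.assoc[symmetric])
    next
      case False
      then have "pmf envp (j, K) = 0" by (simp only: envp if_not_P[OF False] if_False)
      then show ?thesis using False by auto
    qed
  qed
  show ?thesis
    unfolding S QQ_def RR_def pt by (simp add: nn_integral_measure_pmf)
qed




definition aa :: "nat pmf \<Rightarrow> (nat \<Rightarrow> (nat \<Rightarrow> nat) pmf) \<Rightarrow> nat \<Rightarrow> nat \<Rightarrow> nat \<Rightarrow> ennreal" where
  "aa p Xv z n k = (\<integral>\<^sup>+v. of_bool (length v = n) * bb p Xv z v k \<partial>count_space UNIV)"

lemma bij_snoc: "bij_betw (\<lambda>x. fst x @ [snd x]) (UNIV :: (nat list \<times> nat) set) {v. v \<noteq> []}"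
  by (rule bij_betwI[where g="\<lambda>v. (butlast v, last v)"]) auto

lemma count_snoc:
  fixes f :: "nat list \<Rightarrow> ennreal"
  assumes "f [] = 0"
  shows "(\<integral>\<^sup>+v. f v \<partial>count_space UNIV) = (\<integral>\<^sup>+v. \<integral>\<^sup>+j. f (v @ [j]) \<partial>count_space UNIV \<partial>count_space UNIV)"
proof -
  have "(\<integral>\<^sup>+v. f v \<partial>count_space UNIV) = (\<integral>\<^sup>+v. f v \<partial>count_space {v. v \<noteq> []})"
    by (subst nn_integral_count_space_indicator) (auto intro!: nn_integral_cong simp: indicator_def assms)
  also have "\<dots> = (\<integral>\<^sup>+x. f (fst x @ [snd x]) \<partial>count_space UNIV)"
    by (rule nn_integral_bij_count_space[OF bij_snoc, symmetric])
  also have "\<dots> = (\<integral>\<^sup>+v. \<integral>\<^sup>+j. f (v @ [j]) \<partial>count_space UNIV \<partial>count_space UNIV)"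
    by (subst nn_integral_fst_count_space[symmetric]) simp
  finally show ?thesis .
qed

lemma aa_Suc: "aa p Xv z (Suc n) k = (\<Sum>m. aa p Xv z n m * QQ p Xv m k)"
proof -
  have "aa p Xv z (Suc n) k = (\<integral>\<^sup>+v. \<integral>\<^sup>+j. of_bool (length (v@[j]) = Suc n) * bb p Xv z (v@[j]) k \<partial>count_space UNIV \<partial>count_space UNIV)"
    unfolding aa_def by (rule count_snoc) simp
  also have "\<dots> = (\<integral>\<^sup>+v. (\<Sum>m. (of_bool (length v = n) * bb p Xv z v m) * QQ p Xv m k) \<partial>count_space UNIV)"
  proof (rule nn_integral_cong)
    fix v
    have "(\<integral>\<^sup>+j. of_bool (length (v@[j]) = Suc n) * bb p Xv z (v@[j]) k \<partial>count_space UNIV)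
        = (\<integral>\<^sup>+j. (\<Sum>m. of_bool (length v = n) * bb p Xv z v m * RR p Xv m j k) \<partial>count_space UNIV)"
    proof (rule nn_integral_cong)
      fix j
      have "of_bool (length (v@[j]) = Suc n) * bb p Xv z (v@[j]) k = of_bool (length v = n) * (\<Sum>m. bb p Xv z v m * RR p Xv m j k)"
        by (simp only: bb_snoc length_append_singleton nat.inject)
      also have "\<dots> = (\<Sum>m. of_bool (length v = n) * (bb p Xv z v m * RR p Xv m j k))"
        by (rule ennreal_suminf_cmult[symmetric])
      finally show "of_bool (length (v@[j]) = Suc n) * bb p Xv z (v@[j]) k = (\<Sum>m. of_bool (length v = n) * bb p Xv z v m * RR p Xv m j k)"
        by (simp only: mult.assoc)
    qed
    also have "\<dots> = (\<Sum>m. \<integral>\<^sup>+j. of_bool (length v = n) * bb p Xv z v m * RR p Xv m j k \<partial>count_space UNIV)"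
      by (rule nn_integral_suminf) (rule borel_measurable_count_space)
    also have "\<dots> = (\<Sum>m. (of_bool (length v = n) * bb p Xv z v m) * QQ p Xv m k)"
      by (simp only: nn_integral_cmult[OF borel_measurable_count_space] QQ_def)
    finally show "(\<integral>\<^sup>+j. of_bool (length (v@[j]) = Suc n) * bb p Xv z (v@[j]) k \<partial>count_space UNIV)
        = (\<Sum>m. (of_bool (length v = n) * bb p Xv z v m) * QQ p Xv m k)" .
  qed
  also have "\<dots> = (\<Sum>m. \<integral>\<^sup>+v. (of_bool (length v = n) * bb p Xv z v m) * QQ p Xv m k \<partial>count_space UNIV)"
    by (rule nn_integral_suminf) (rule borel_measurable_count_space)
  also have "\<dots> = (\<Sum>m. aa p Xv z n m * QQ p Xv m k)"
    by (simp only: nn_integral_multc[OF borel_measurable_count_space] aa_def)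
  finally show ?thesis .
qed

lemma aa_0: "aa p Xv z 0 k = of_bool (z = k)"
proof -
  have "aa p Xv z 0 k = (\<Sum>v\<in>{[]}. of_bool (length v = 0) * bb p Xv z v k)"
    unfolding aa_def by (rule nn_integral_count_space') auto
  then show ?thesis by (simp add: bb_Nil)
qed

lemma aa_main:
  assumes envp: "\<And>j k. pmf envp (j, k) = (if 1 \<le> j \<and> j \<le> k then pmf p k / nu p else 0)"
  shows "aa p Xv z n k = ennreal (nu p ^ n) * ennreal (pmf (abpre Xv envp n z) k)"
proof (induction n arbitrary: k)
  case 0
  then show ?case by (simp add: aa_0 abpre_0 indicator_def)
next
  case (Suc n)
  have nu: "nu p > 0" by (rule nu_pos[OF envp])
  have "aa p Xv z (Suc n) k = (\<Sum>m. ennreal (nu p ^ n) * ennreal (pmf (abpre Xv envp n z) m) * (ennreal (nu p) * SS Xv envp m k))"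
    by (simp add: aa_Suc Suc.IH QQ_eq[OF envp])
  also have "\<dots> = (ennreal (nu p ^ n) * ennreal (nu p)) * (\<Sum>m. ennreal (pmf (abpre Xv envp n z) m) * SS Xv envp m k)"
    by (subst ennreal_suminf_cmult[symmetric]) (simp add: mult_ac)
  also have "ennreal (nu p ^ n) * ennreal (nu p) = ennreal (nu p ^ Suc n)"
    using nu by (subst ennreal_mult[symmetric]) (auto simp: mult.commute)
  finally show ?case by (simp add: abpre_Suc)
qed




lemma cell_gen_0: "cell_gen w 0 = {[]}" by (auto simp: cell_gen_def)

lemma cell_gen_Suc_sub: "cell_gen w (Suc n) \<subseteq> (\<Union>v\<in>cell_gen w n. (\<lambda>j. v@[j]) ` {..Ncell w v})"
proof
  fix u assume u: "u \<in> cell_gen w (Suc n)"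
  then have l: "length u = Suc n" and c: "Cc w u" by (auto simp: cell_gen_iff)
  then have ne: "u \<noteq> []" by auto
  have eq: "u = butlast u @ [last u]" using ne by simp
  have "Cc w (butlast u @ [last u])" using c eq by simp
  then have "Cc w (butlast u)" "last u \<le> Ncell w (butlast u)" by (simp_all only: Cc_snoc)
  moreover have "length (butlast u) = n" using l by simp
  ultimately show "u \<in> (\<Union>v\<in>cell_gen w n. (\<lambda>j. v@[j]) ` {..Ncell w v})"
    using eq by (auto simp: cell_gen_iff intro!: bexI[of _ "butlast u"])
qed

lemma finite_cell_gen: "finite (cell_gen w n)"
proof (induction n)
  case 0 then show ?case by (simp add: cell_gen_0)
next
  case (Suc n) then show ?case using finite_subset[OF cell_gen_Suc_sub] by blast
qed

lemma card_eq: "finite S \<Longrightarrow> (of_nat (card S) :: ennreal) = (\<integral>\<^sup>+v. of_bool (v \<in> S) \<partial>count_space UNIV)"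
  by (subst nn_integral_count_space'[where A=S]) auto

lemma meas_indA[measurable]: "(\<lambda>w. of_bool (Cc w v \<and> parasites w z v \<in> A) :: ennreal) \<in> borel_measurable (PP p Xv)"
  by measurable

lemma Tgen: "(\<integral>\<^sup>+w. of_nat (card {v \<in> cell_gen w n. parasites w z v \<in> A}) \<partial>PP p Xv)
  = (\<integral>\<^sup>+v. of_bool (length v = n) * (\<integral>\<^sup>+w. of_bool (Cc w v \<and> parasites w z v \<in> A) \<partial>PP p Xv) \<partial>count_space UNIV)"
proof -
  have "(\<integral>\<^sup>+w. of_nat (card {v \<in> cell_gen w n. parasites w z v \<in> A}) \<partial>PP p Xv)
     = (\<integral>\<^sup>+w. \<integral>\<^sup>+v. of_bool (length v = n) * of_bool (Cc w v \<and> parasites w z v \<in> A) \<partial>count_space UNIV \<partial>PP p Xv)"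
  proof (rule nn_integral_cong)
    fix w
    have f: "finite {v \<in> cell_gen w n. parasites w z v \<in> A}" using finite_cell_gen by simp
    show "(of_nat (card {v \<in> cell_gen w n. parasites w z v \<in> A}) :: ennreal)
       = (\<integral>\<^sup>+v. of_bool (length v = n) * of_bool (Cc w v \<and> parasites w z v \<in> A) \<partial>count_space UNIV)"
      unfolding card_eq[OF f] by (intro nn_integral_cong) (auto simp: cell_gen_iff)
  qed
  also have "\<dots> = (\<integral>\<^sup>+v. \<integral>\<^sup>+w. of_bool (length v = n) * of_bool (Cc w v \<and> parasites w z v \<in> A) \<partial>PP p Xv \<partial>count_space UNIV)"
    by (rule nn_integral_count_space_nn_integral)
       (simp, rule borel_measurable_times_ennreal[OF measurable_const meas_indA], simp)
  also have "\<dots> = (\<integral>\<^sup>+v. of_bool (length v = n) * (\<integral>\<^sup>+w. of_bool (Cc w v \<and> parasites w z v \<in> A) \<partial>PP p Xv) \<partial>count_space UNIV)"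
    by (simp only: nn_integral_cmult[OF meas_indA])
  finally show ?thesis .
qed

lemma ETnk: "(\<integral>\<^sup>+w. of_nat (Tnk w z n k) \<partial>PP p Xv) = aa p Xv z n k"
proof -
  have "(\<integral>\<^sup>+w. of_nat (Tnk w z n k) \<partial>PP p Xv) = (\<integral>\<^sup>+w. of_nat (card {v \<in> cell_gen w n. parasites w z v \<in> {k}}) \<partial>PP p Xv)"
    by (simp add: Tnk_def)
  also have "\<dots> = aa p Xv z n k"
    unfolding Tgen aa_def bb_def by simp
  finally show ?thesis .
qed

lemma ETstar: "(\<integral>\<^sup>+w. of_nat (Tstar w z n) \<partial>PP p Xv) = (\<Sum>k. of_bool (0 < k) * aa p Xv z n k)"
proof -
  have "(\<integral>\<^sup>+w. of_nat (Tstar w z n) \<partial>PP p Xv) = (\<integral>\<^sup>+w. of_nat (card {v \<in> cell_gen w n. parasites w z v \<in> {m. 0 < m}}) \<partial>PP p Xv)"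
    by (simp add: Tstar_def)
  also have "\<dots> = (\<integral>\<^sup>+v. of_bool (length v = n) * (\<integral>\<^sup>+w. of_bool (Cc w v \<and> parasites w z v \<in> {m. 0 < m}) \<partial>PP p Xv) \<partial>count_space UNIV)"
    by (rule Tgen)
  also have "\<dots> = (\<integral>\<^sup>+v. (\<Sum>k. of_bool (0 < k) * (of_bool (length v = n) * bb p Xv z v k)) \<partial>count_space UNIV)"
  proof (rule nn_integral_cong)
    fix v
    have "(\<integral>\<^sup>+w. of_bool (Cc w v \<and> parasites w z v \<in> {m. 0 < m}) \<partial>PP p Xv)
      = (\<integral>\<^sup>+w. (\<Sum>k. of_bool (0 < k) * of_bool (Cc w v \<and> parasites w z v = k)) \<partial>PP p Xv)"
    proof (rule nn_integral_cong)
      fix w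
      have "(\<Sum>k. of_bool (0 < k) * of_bool (Cc w v \<and> parasites w z v = k))
        = (\<Sum>k. of_bool (parasites w z v = k) * ((of_bool (0 < k) * of_bool (Cc w v)) :: ennreal))"
        by (intro suminf_cong) auto
      also have "\<dots> = of_bool (0 < parasites w z v) * of_bool (Cc w v)"
        by (rule suminf_single[where f="\<lambda>k. of_bool (0 < k) * of_bool (Cc w v)"])
      finally show "(of_bool (Cc w v \<and> parasites w z v \<in> {m. 0 < m}) :: ennreal) = (\<Sum>k. of_bool (0 < k) * of_bool (Cc w v \<and> parasites w z v = k))"
        by auto
    qed
    also have "\<dots> = (\<Sum>k. \<integral>\<^sup>+w. of_bool (0 < k) * of_bool (Cc w v \<and> parasites w z v = k) \<partial>PP p Xv)"
      by (rule nn_integral_suminf) (rule borel_measurable_times_ennreal[OF measurable_const meas_ind], simp)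
    also have "\<dots> = (\<Sum>k. of_bool (0 < k) * bb p Xv z v k)"
      by (simp only: nn_integral_cmult[OF meas_ind] bb_def)
    finally show "of_bool (length v = n) * (\<integral>\<^sup>+w. of_bool (Cc w v \<and> parasites w z v \<in> {m. 0 < m}) \<partial>PP p Xv)
       = (\<Sum>k. of_bool (0 < k) * (of_bool (length v = n) * bb p Xv z v k))"
      by (simp only: ennreal_suminf_cmult[symmetric] mult.left_commute)
  qed
  also have "\<dots> = (\<Sum>k. \<integral>\<^sup>+v. of_bool (0 < k) * (of_bool (length v = n) * bb p Xv z v k) \<partial>count_space UNIV)"
    by (rule nn_integral_suminf) (rule borel_measurable_count_space)
  also have "\<dots> = (\<Sum>k. of_bool (0 < k) * aa p Xv z n k)"
    by (simp only: nn_integral_cmult[OF borel_measurable_count_space] aa_def)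
  finally show ?thesis .
qed

lemma emeasure_pmf_sum: "emeasure (measure_pmf M) A = (\<Sum>k::nat. of_bool (k \<in> A) * ennreal (pmf M k))"
proof -
  have "emeasure (measure_pmf M) A = (\<integral>\<^sup>+k. indicator A k \<partial>measure_pmf M)" by simp
  also have "\<dots> = (\<integral>\<^sup>+k. ennreal (pmf M k) * indicator A k \<partial>count_space UNIV)"
    by (rule nn_integral_measure_pmf)
  also have "\<dots> = (\<Sum>k. of_bool (k \<in> A) * ennreal (pmf M k))"
    by (simp add: nn_integral_count_space_nat indicator_def mult.commute)
  finally show ?thesis .
qed




theorem proposition1:
  fixes p :: "nat pmf" and Xv :: "nat \<Rightarrow> (nat \<Rightarrow> nat) pmf"
    and envp :: "(nat \<times> nat) pmf" and n k z :: nat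
  assumes finite_mean: "integrable (measure_pmf p) real"
    and gamma_pos: "0 < gamma_bwbp p Xv"
    and gamma_fin: "gamma_bwbp p Xv < \<infinity>"
    and p1: "pmf p 1 < 1"
    and gen1: "pmf (gen1_total p Xv) 1 \<noteq> 1"
    and two: "\<exists>j k. 1 \<le> j \<and> j \<le> k \<and> pmf p k * measure_pmf.prob (Xv k) {x. 2 \<le> x j} > 0"
    and envp: "\<And>j k. pmf envp (j, k) = (if 1 \<le> j \<and> j \<le> k then pmf p k / nu p else 0)"
  shows "ennreal (measure_pmf.prob (abpre Xv envp n z) {k})
           = ennreal (1 / nu p ^ n) * (\<integral>\<^sup>+ \<omega>. of_nat (Tnk \<omega> z n k) \<partial>bwbp_space p Xv)
         \<and> ennreal (measure_pmf.prob (abpre Xv envp n z) {m. m > 0})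
           = ennreal (1 / nu p ^ n) * (\<integral>\<^sup>+ \<omega>. of_nat (Tstar \<omega> z n) \<partial>bwbp_space p Xv)"
proof -
  have nu: "nu p > 0" by (rule nu_pos[OF envp])
  have inv: "\<And>x. ennreal (1 / nu p ^ n) * (ennreal (nu p ^ n) * x) = x"
  proof -
    fix x
    have "ennreal (1 / nu p ^ n) * ennreal (nu p ^ n) = ennreal (1 / nu p ^ n * nu p ^ n)"
      using nu by (subst ennreal_mult[symmetric]) auto
    also have "\<dots> = 1" using nu by simp
    finally show "ennreal (1 / nu p ^ n) * (ennreal (nu p ^ n) * x) = x" by (simp add: mult.assoc[symmetric])
  qed
  have A: "ennreal (measure_pmf.prob (abpre Xv envp n z) {k})
           = ennreal (1 / nu p ^ n) * (\<integral>\<^sup>+ \<omega>. of_nat (Tnk \<omega> z n k) \<partial>bwbp_space p Xv)"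
    unfolding bw_eq ETnk aa_main[OF envp] inv by (simp add: measure_pmf_single)
  have "(\<integral>\<^sup>+ \<omega>. of_nat (Tstar \<omega> z n) \<partial>bwbp_space p Xv)
      = (\<Sum>k. of_bool (0 < k) * (ennreal (nu p ^ n) * ennreal (pmf (abpre Xv envp n z) k)))"
    unfolding bw_eq ETstar aa_main[OF envp] ..
  also have "\<dots> = ennreal (nu p ^ n) * (\<Sum>k. of_bool (k \<in> {m. m > 0}) * ennreal (pmf (abpre Xv envp n z) k))"
    by (subst ennreal_suminf_cmult[symmetric]) (simp add: mult.left_commute)
  also have "\<dots> = ennreal (nu p ^ n) * ennreal (measure_pmf.prob (abpre Xv envp n z) {m. m > 0})"
    by (simp only: emeasure_pmf_sum[symmetric] measure_pmf.emeasure_eq_measure)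
  finally have B: "ennreal (measure_pmf.prob (abpre Xv envp n z) {m. m > 0})
           = ennreal (1 / nu p ^ n) * (\<integral>\<^sup>+ \<omega>. of_nat (Tstar \<omega> z n) \<partial>bwbp_space p Xv)"
    by (simp only: inv)
  show ?thesis using A B by blast
qed


end
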